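(* Let $\eta>0$ and consider the network (NonAut-II-$\eta$) with species $\Lambda_1,\mathrm{I}_1,\Lambda_2,\mathrm{I}_2$ and reactions \[ 1:\ \eta\Lambda_1+\Lambda_2\to\eta\Lambda_1+\mathrm{I}_2,\quad 2:\ \mathrm{I}_2\to\Lambda_2,\quad 3:\ \eta\Lambda_2+\Lambda_1\to\eta\Lambda_2+\mathrm{I}_1,\quad 4:\ \mathrm{I}_1\to\Lambda_1, \] with the associated ODEs \[ \begin{cases} [\dot\Lambda_1]=-r_3([\Lambda_2],[\Lambda_1])+r_4([\mathrm{I}_1]),\\ [\dot{\mathrm I}_1]=r_3([\Lambda_2],[\Lambda_1])-r_4([\mathrm{I}_1]),\\ [\dot\Lambda_2]=-r_1([\Lambda_1],[\Lambda_2])+r_2([\mathrm{I}_2]),\\ [\dot{\mathrm I}_2]=r_1([\Lambda_1],[\Lambda_2])-r_2([\mathrm{I}_2]), \end{cases} \] where all rates are monotone chemical functions, under the kinetic symmetry constraints $r_1\equiv r_3\equiv r_o$ and $r_2\equiv r_4\equiv r_e$ (as functions of their ordered arguments). Let $\partial_1 r_o,\partial_2 r_o$ denote the derivatives of $r_o$ with respect to its first and second arguments and $\partial_I r_e$ the derivative of $r_e$, evaluated at a homogeneous steady state. Then the system has the capacity for zero-eigenvalue bifurcation and consequently differentiation, with bifurcation condition \[ \partial_2 r_o+\partial_I r_e=\partial_1 r_o, \] and the existence of an unstable (homogeneous) steady state requires $\partial_2 r_o+\partial_I r_e<\partial_1 r_o$. The unique associated instability motif, represented by a non-autocatalytic unstable-positive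 feedback, which generates the necessary instability is the subnetwork with species $\{\Lambda_1,\Lambda_2\}$ and reactions $\{1:\ \eta\Lambda_1+\Lambda_2\to\eta\Lambda_1+\dots,\ 3:\ \eta\Lambda_2+\Lambda_1\to\eta\Lambda_2+\dots\}$.
   Context: A rate function is monotone chemical if it is nonnegative, positive exactly when all its reactant concentrations are positive, independent of non-reactant concentrations, and has positive partial derivative in each reactant concentration at positive concentrations; kinetics are parameter-rich, so partial derivatives at a positive steady state can be prescribed as arbitrary positive numbers. The system has the conservation laws $[\Lambda_1]+[\mathrm I_1]$ and $[\Lambda_2]+[\mathrm I_2]$; capacity for zero-eigenvalue bifurcation means there exist admissible derivative values at a homogeneous positive steady state ($[\Lambda_1]=[\Lambda_2]$, $[\mathrm I_1]=[\mathrm I_2]$) for which the Jacobian restricted to the invariant set fixing these conserved quantities is singular. For a network with stoichiometric matrix $S_{mj}$ (net production of species $m$ in reaction $j$), a $k$-Child-Selection triple consists of $k$ species $\kappa$, $k$ reactions $E_\kappa$ and a bijection $J:\kappa\to E_\kappa$ such that each species in $\kappa$ is a reactant of its assigned reaction; its CS-matrix is $S[\kappa]_{ml}=S_{m,J(X_l)}$. An unstable-positive feedback is a $k\times k$ CS-matrix with $\operatorname{sign}\det=(-1)^{k-1}$ and no proper principal $k'\times k'$ submatrix with determinant of sign $(-1)^{k'-1}$; it is non-autocatalytic if it is not Metzler (some off-diagonal entry negative). Its instability motif is the subnetwork consisting of species $\kappa$ and reactions $E_\kappa$, disregarding other species. *)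

theory Defs
  imports Complex_Main "HOL-Combinatorics.Permutations"
begin

datatype species = L1 | I1 | L2 | I2
datatype reaction = R1 | R2 | R3 | R4

lemma species_UNIV: "(UNIV :: species set) = {L1, I1, L2, I2}"
  using species.exhaust by auto
lemma reaction_UNIV: "(UNIV :: reaction set) = {R1, R2, R3, R4}"
  using reaction.exhaust by auto

instance species :: finite
  by standard (simp add: species_UNIV)
instance reaction :: finite
  by standard (simp add: reaction_UNIV)

fun inp :: "real \<Rightarrow> reaction \<Rightarrow> species \<Rightarrow> real" where
  "inp eta R1 m = (if m = L1 then eta else if m = L2 then 1 else 0)"
| "inp eta R2 m = (if m = I2 then 1 else 0)"
| "inp eta R3 m = (if m = L2 then eta else if m = L1 then 1 else 0)"
| "inp eta R4 m = (if m = I1 then 1 else 0)"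

fun outp :: "real \<Rightarrow> reaction \<Rightarrow> species \<Rightarrow> real" where
  "outp eta R1 m = (if m = L1 then eta else if m = I2 then 1 else 0)"
| "outp eta R2 m = (if m = L2 then 1 else 0)"
| "outp eta R3 m = (if m = L2 then eta else if m = I1 then 1 else 0)"
| "outp eta R4 m = (if m = L1 then 1 else 0)"

definition stoich :: "real \<Rightarrow> species \<Rightarrow> reaction \<Rightarrow> real" where
  "stoich eta m j = outp eta j m - inp eta j m"

definition reactant :: "real \<Rightarrow> species \<Rightarrow> reaction \<Rightarrow> bool" where
  "reactant eta m j \<longleftrightarrow> inp eta j m > 0"

text \<open>dr j n is the partial derivative of rate r_j with respect to [n] at a positive
  (homogeneous) steady state. Monotone chemical kinetics: positive for reactants,
  zero for non-reactants; parameter-richness: otherwise arbitrary. Symmetry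
  r_1 = r_3 = r_o, r_2 = r_4 = r_e (ordered arguments r_1([L1],[L2]), r_3([L2],[L1]))
  evaluated at a homogeneous state gives the equalities below.\<close>
definition admissible :: "real \<Rightarrow> (reaction \<Rightarrow> species \<Rightarrow> real) \<Rightarrow> bool" where
  "admissible eta dr \<longleftrightarrow>
     (\<forall>j m. (reactant eta m j \<longrightarrow> dr j m > 0) \<and> (\<not> reactant eta m j \<longrightarrow> dr j m = 0))
     \<and> dr R1 L1 = dr R3 L2 \<and> dr R1 L2 = dr R3 L1 \<and> dr R2 I2 = dr R4 I1"

definition d1_ro :: "(reaction \<Rightarrow> species \<Rightarrow> real) \<Rightarrow> real" where "d1_ro dr = dr R1 L1"
definition d2_ro :: "(reaction \<Rightarrow> species \<Rightarrow> real) \<Rightarrow> real" where "d2_ro dr = dr R1 L2"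
definition dI_re :: "(reaction \<Rightarrow> species \<Rightarrow> real) \<Rightarrow> real" where "dI_re dr = dr R2 I2"

definition jac :: "real \<Rightarrow> (reaction \<Rightarrow> species \<Rightarrow> real) \<Rightarrow> species \<Rightarrow> species \<Rightarrow> real" where
  "jac eta dr m n = (\<Sum>j\<in>UNIV. stoich eta m j * dr j n)"

text \<open>Tangent space of the invariant set fixing the conserved quantities
  [L1]+[I1] and [L2]+[I2].\<close>
definition tangent :: "(species \<Rightarrow> 'a::comm_ring) \<Rightarrow> bool" where
  "tangent v \<longleftrightarrow> v L1 + v I1 = 0 \<and> v L2 + v I2 = 0"

definition restricted_singular :: "(species \<Rightarrow> species \<Rightarrow> real) \<Rightarrow> bool" where
  "restricted_singular J \<longleftrightarrow>
     (\<exists>v::species \<Rightarrow> real. (\<exists>n. v n \<noteq> 0) \<and> tangent v \<and> (\<forall>m. (\<Sum>n\<in>UNIV. J m n * v n) = 0))"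

definition restricted_unstable :: "(species \<Rightarrow> species \<Rightarrow> real) \<Rightarrow> bool" where
  "restricted_unstable J \<longleftrightarrow>
     (\<exists>\<mu>::complex. Re \<mu> > 0 \<and> (\<exists>v::species \<Rightarrow> complex. (\<exists>n. v n \<noteq> 0) \<and> tangent v \<and>
        (\<forall>m. (\<Sum>n\<in>UNIV. complex_of_real (J m n) * v n) = \<mu> * v m)))"

definition capacity_zero_eig_bif :: "real \<Rightarrow> bool" where
  "capacity_zero_eig_bif eta \<longleftrightarrow>
     (\<exists>dr. admissible eta dr \<and> restricted_singular (jac eta dr))"

definition setdet :: "'a set \<Rightarrow> ('a \<Rightarrow> 'a \<Rightarrow> real) \<Rightarrow> real" where
  "setdet K M = (\<Sum>p\<in>{p. p permutes K}. of_int (sign p) * (\<Prod>i\<in>K. M i (p i)))"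

definition CS_triple :: "real \<Rightarrow> species set \<Rightarrow> (species \<Rightarrow> reaction) \<Rightarrow> bool" where
  "CS_triple eta K J \<longleftrightarrow> K \<noteq> {} \<and> inj_on J K \<and> (\<forall>X\<in>K. reactant eta X (J X))"

definition CS_matrix :: "real \<Rightarrow> (species \<Rightarrow> reaction) \<Rightarrow> species \<Rightarrow> species \<Rightarrow> real" where
  "CS_matrix eta J m l = stoich eta m (J l)"

definition unstable_positive :: "species set \<Rightarrow> (species \<Rightarrow> species \<Rightarrow> real) \<Rightarrow> bool" where
  "unstable_positive K M \<longleftrightarrow>
     sgn (setdet K M) = (-1) ^ (card K - 1) \<and>
     (\<forall>K'. K' \<subset> K \<and> K' \<noteq> {} \<longrightarrow> sgn (setdet K' M) \<noteq> (-1) ^ (card K' - 1))"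

definition non_autocatalytic :: "species set \<Rightarrow> (species \<Rightarrow> species \<Rightarrow> real) \<Rightarrow> bool" where
  "non_autocatalytic K M \<longleftrightarrow> (\<exists>i\<in>K. \<exists>j\<in>K. i \<noteq> j \<and> M i j < 0)"

definition nonaut_motifs :: "real \<Rightarrow> (species set \<times> reaction set) set" where
  "nonaut_motifs eta = {(K, J ` K) | K J. CS_triple eta K J \<and>
       unstable_positive K (CS_matrix eta J) \<and> non_autocatalytic K (CS_matrix eta J)}"

end

theory Submission
  imports Defs
begin


lemma setdet_single: "setdet {a} M = M a a"
  unfolding setdet_def by simp

lemma setdet_pair:
  assumes "a \<noteq> b"
  shows "setdet {a,b} M = M a a * M b b - M a b * M b a"
proof -
  have "setdet {a,b} M = (\<Sum>c\<in>{a,b}. \<Sum>q\<in>{p. p permutes {b}}.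
     of_int (sign (Transposition.transpose a c \<circ> q)) * (\<Prod>i\<in>{a,b}. M i ((Transposition.transpose a c \<circ> q) i)))"
    unfolding setdet_def by (rule sum_over_permutations_insert) (use assms in auto)
  also have "\<dots> = M a a * M b b - M a b * M b a"
    using assms by (simp add: sign_swap_id Transposition.transpose_def)
  finally show ?thesis .
qed

lemma setdet_negcols:
  assumes fin: "finite K" and aK: "a \<in> K" and bK: "b \<in> K" and ab: "a \<noteq> b"
    and neg: "\<And>i. i \<in> K \<Longrightarrow> M i a = - M i b"
  shows "setdet K M = 0"
proof -
  define t where "t = Transposition.transpose a b"
  define e where "e = (\<lambda>j. if j = a \<or> j = b then -1 else (1::real))"
  have tK: "t permutes K" unfolding t_def using aK bK by (simp add: permutes_swap_id)
  have tt: "t \<circ> t = id" unfolding t_def by (simp add: fun_eq_iff)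
  have eps: "M i (t j) = e j * M i j" if "i \<in> K" for i j
  proof -
    have "j = a \<or> j = b \<or> (j \<noteq> a \<and> j \<noteq> b)" by blast
    then show ?thesis using neg[OF that] ab unfolding t_def e_def by (elim disjE) auto
  qed
  have pe: "(\<Prod>j\<in>K. e j) = 1"
  proof -
    have "(\<Prod>j\<in>K. e j) = (\<Prod>j\<in>{a,b}. e j) * (\<Prod>j\<in>K - {a,b}. e j)"
      using prod.subset_diff[of "{a,b}" K e] fin aK bK by (simp add: mult.commute)
    also have "(\<Prod>j\<in>K - {a,b}. e j) = 1" by (rule prod.neutral) (auto simp: e_def)
    finally show ?thesis using ab by (simp add: e_def)
  qed
  define f where "f = (\<lambda>p. of_int (sign p) * (\<Prod>i\<in>K. M i (p i)))"
  have key: "f (t \<circ> p) = - f p" if "p permutes K" for p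
  proof -
    have "sign (t \<circ> p) = sign t * sign p"
      by (rule sign_compose) (use tK that fin in \<open>auto intro: permutes_imp_permutation\<close>)
    moreover have "sign t = -1" unfolding t_def using ab by (simp add: sign_swap_id)
    moreover have "(\<Prod>i\<in>K. M i (t (p i))) = (\<Prod>i\<in>K. e (p i)) * (\<Prod>i\<in>K. M i (p i))"
      by (simp add: eps prod.distrib)
    moreover have "(\<Prod>i\<in>K. e (p i)) = (\<Prod>j\<in>K. e j)"
      using prod.reindex[of p K e] permutes_inj_on[OF that] permutes_image[OF that] by simp
    ultimately show ?thesis unfolding f_def using pe by simp
  qed
  have "setdet K M = sum f {p. p permutes K}" unfolding setdet_def f_def by simp
  also have "\<dots> = sum (\<lambda>p. f (t \<circ> p)) {p. p permutes K}"
    by (rule sum.reindex_bij_witness[where i="\<lambda>p. t \<circ> p" and j="\<lambda>p. t \<circ> p"])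
       (auto simp: tK permutes_compose o_assoc tt)
  also have "\<dots> = - sum f {p. p permutes K}"
    by (simp add: key sum_negf)
  finally show ?thesis unfolding setdet_def f_def by simp
qed



lemma adm_facts:
  assumes "eta > 0" "admissible eta dr"
  shows "dr R1 L1 > 0" "dr R1 L2 > 0" "dr R2 I2 > 0" "dr R3 L2 = dr R1 L1" "dr R3 L1 = dr R1 L2"
    "dr R4 I1 = dr R2 I2"
    "dr R1 I1 = 0" "dr R1 I2 = 0" "dr R2 L1 = 0" "dr R2 L2 = 0" "dr R2 I1 = 0"
    "dr R3 I1 = 0" "dr R3 I2 = 0" "dr R4 L1 = 0" "dr R4 L2 = 0" "dr R4 I2 = 0"
  using assms unfolding admissible_def reactant_def by auto

lemma jac_vals:
  assumes "eta > 0" "admissible eta dr"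
  defines "a \<equiv> dr R1 L1" and "b \<equiv> dr R1 L2" and "c \<equiv> dr R2 I2"
  shows "jac eta dr m n = (case (m, n) of
     (L1, L1) \<Rightarrow> -b | (L1, L2) \<Rightarrow> -a | (L1, I1) \<Rightarrow> c | (L1, I2) \<Rightarrow> 0
   | (I1, L1) \<Rightarrow> b | (I1, L2) \<Rightarrow> a | (I1, I1) \<Rightarrow> -c | (I1, I2) \<Rightarrow> 0
   | (L2, L1) \<Rightarrow> -a | (L2, L2) \<Rightarrow> -b | (L2, I1) \<Rightarrow> 0 | (L2, I2) \<Rightarrow> c
   | (I2, L1) \<Rightarrow> a | (I2, L2) \<Rightarrow> b | (I2, I1) \<Rightarrow> 0 | (I2, I2) \<Rightarrow> -c)"
  using adm_facts[OF assms(1,2)] unfolding a_def b_def c_def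
  by (cases m; cases n) (simp_all add: jac_def reaction_UNIV stoich_def)



lemma sum_species: "(\<Sum>n\<in>UNIV. f n) = f L1 + f I1 + f L2 + f I2"
  by (simp add: species_UNIV add.assoc)

lemma sing_iff:
  assumes "eta > 0" "admissible eta dr"
  shows "restricted_singular (jac eta dr) \<longleftrightarrow> d2_ro dr + dI_re dr = d1_ro dr"
proof -
  note F = adm_facts[OF assms]
  define a where "a = dr R1 L1"
  define b where "b = dr R1 L2"
  define c where "c = dr R2 I2"
  have pos: "a > 0" "b > 0" "c > 0" using F unfolding a_def b_def c_def by auto
  note J = jac_vals[OF assms, folded a_def b_def c_def]
  show ?thesis
  proof
    assume "restricted_singular (jac eta dr)"
    then obtain v :: "species \<Rightarrow> real" where nz: "\<exists>n. v n \<noteq> 0" and t: "tangent v"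
      and eq: "\<And>m. (\<Sum>n\<in>UNIV. jac eta dr m n * v n) = 0"
      unfolding restricted_singular_def by blast
    define x where "x = v L1"
    define y where "y = v L2"
    have vI: "v I1 = - x" "v I2 = - y" using t unfolding tangent_def x_def y_def by auto
    have e1: "(b + c) * x + a * y = 0" using eq[of L1] vI unfolding sum_species J x_def y_def
      by (simp add: algebra_simps)
    have e2: "a * x + (b + c) * y = 0" using eq[of L2] vI unfolding sum_species J x_def y_def
      by (simp add: algebra_simps)
    have xy: "x \<noteq> 0 \<or> y \<noteq> 0"
    proof (rule ccontr)
      assume "\<not> ?thesis"
      then have "\<forall>n. v n = 0" using vI unfolding x_def y_def by (auto intro: species.exhaust)
        (metis species.exhaust)
      with nz show False by blast
    qed
    have "(b + c + a) * (x + y) = 0" using e1 e2 by (simp add: algebra_simps)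
    then have "y = - x" using pos by simp
    then have "(b + c - a) * x = 0" "x \<noteq> 0" using e1 xy by (auto simp: algebra_simps)
    then have "b + c = a" by simp
    then show "d2_ro dr + dI_re dr = d1_ro dr" unfolding d1_ro_def d2_ro_def dI_re_def a_def b_def c_def .
  next
    assume "d2_ro dr + dI_re dr = d1_ro dr"
    then have h: "b + c = a" unfolding d1_ro_def d2_ro_def dI_re_def a_def b_def c_def .
    define v :: "species \<Rightarrow> real" where "v = (\<lambda>n. case n of L1 \<Rightarrow> 1 | I1 \<Rightarrow> -1 | L2 \<Rightarrow> -1 | I2 \<Rightarrow> 1)"
    have "(\<forall>m. (\<Sum>n\<in>UNIV. jac eta dr m n * v n) = 0)"
    proof
      fix m show "(\<Sum>n\<in>UNIV. jac eta dr m n * v n) = 0"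
        using h by (cases m) (simp_all add: sum_species J v_def)
    qed
    moreover have "tangent v" "v L1 \<noteq> 0" by (simp_all add: tangent_def v_def)
    ultimately show "restricted_singular (jac eta dr)" unfolding restricted_singular_def by blast
  qed
qed

lemma unst:
  assumes "eta > 0" "admissible eta dr" "restricted_unstable (jac eta dr)"
  shows "d2_ro dr + dI_re dr < d1_ro dr"
proof -
  note F = adm_facts[OF assms(1,2)]
  define a where "a = dr R1 L1"
  define b where "b = dr R1 L2"
  define c where "c = dr R2 I2"
  have pos: "a > 0" "b > 0" "c > 0" using F unfolding a_def b_def c_def by auto
  note J = jac_vals[OF assms(1,2), folded a_def b_def c_def]
  obtain \<mu> :: complex and v :: "species \<Rightarrow> complex" where mu: "Re \<mu> > 0" and nz: "\<exists>n. v n \<noteq> 0"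
    and t: "tangent v" and eq: "\<And>m. (\<Sum>n\<in>UNIV. complex_of_real (jac eta dr m n) * v n) = \<mu> * v m"
    using assms(3) unfolding restricted_unstable_def by blast
  define x where "x = v L1"
  define y where "y = v L2"
  have vI: "v I1 = - x" "v I2 = - y" using t unfolding tangent_def x_def y_def
    by (auto simp: add_eq_0_iff)
  have r1: "(\<Sum>n\<in>UNIV. complex_of_real (jac eta dr L1 n) * v n) = - (of_real (b + c) * x) - of_real a * y"
    unfolding sum_species J using vI unfolding x_def y_def by (simp add: algebra_simps)
  have e1: "\<mu> * x = - (of_real (b + c) * x) - of_real a * y" using eq[of L1] r1 unfolding x_def by simp
  have e2: "\<mu> * y = - (of_real a * x) - of_real (b + c) * y" using eq[of L2] vI unfolding sum_species J x_def y_def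
    by (simp add: algebra_simps)
  have xy: "x \<noteq> 0 \<or> y \<noteq> 0"
  proof (rule ccontr)
    assume "\<not> ?thesis"
    then have "\<forall>n. v n = 0" using vI unfolding x_def y_def by (metis neg_equal_0_iff_equal species.exhaust)
    with nz show False by blast
  qed
  have "(\<mu> + of_real (b + c + a)) * (x + y) = \<mu> * x + \<mu> * y + of_real (b + c + a) * (x + y)"
    by (simp add: algebra_simps)
  also have "\<dots> = 0" unfolding e1 e2 by (simp add: algebra_simps)
  finally have s1: "(\<mu> + of_real (b + c + a)) * (x + y) = 0" .
  have "(\<mu> + of_real (b + c - a)) * (x - y) = \<mu> * x - \<mu> * y + of_real (b + c - a) * (x - y)"
    by (simp add: algebra_simps)
  also have "\<dots> = 0" unfolding e1 e2 by (simp add: algebra_simps)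
  finally have s2: "(\<mu> + of_real (b + c - a)) * (x - y) = 0" .
  show ?thesis
  proof (cases "x + y = 0")
    case False
    then have "\<mu> = - of_real (b + c + a)" using s1 by (simp add: add_eq_0_iff)
    then have "Re \<mu> < 0" using pos by simp
    with mu show ?thesis by simp
  next
    case True
    then have "x - y \<noteq> 0" using xy by (auto simp: add_eq_0_iff)
    then have "\<mu> = - of_real (b + c - a)" using s2 by (simp add: add_eq_0_iff)
    then have "Re \<mu> = a - b - c" by simp
    with mu show ?thesis unfolding d1_ro_def d2_ro_def dI_re_def a_def b_def c_def by simp
  qed
qed



lemma reactant_iff:
  assumes "eta > 0"
  shows "reactant eta m j \<longleftrightarrow> ((j = R1 \<or> j = R3) \<and> (m = L1 \<or> m = L2)) \<or> (j = R2 \<and> m = I2) \<or> (j = R4 \<and> m = I1)"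
  using assms by (cases j; cases m) (simp_all add: reactant_def)

lemma card_reaction: "card (UNIV :: reaction set) = 4"
  by (simp add: reaction_UNIV)

lemma motif_char:
  assumes eta: "eta > 0" and cs: "CS_triple eta K J" and up: "unstable_positive K (CS_matrix eta J)"
  shows "K = {L1, L2} \<and> J ` K = {R1, R3}"
proof -
  have fin: "finite K" by simp
  have ne: "K \<noteq> {}" and inj: "inj_on J K" and re: "\<And>X. X \<in> K \<Longrightarrow> reactant eta X (J X)"
    using cs unfolding CS_triple_def by auto
  have sg: "sgn (setdet K (CS_matrix eta J)) = (-1) ^ (card K - 1)"
    using up unfolding unstable_positive_def by blast
  have ck: "card K \<ge> 1" using ne fin by (simp add: Suc_le_eq card_gt_0_iff)
  consider "card K = 1" | "card K = 2" | "card K \<ge> 3" using ck by linarith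
  then show ?thesis
  proof cases
    case 1
    then obtain a where K: "K = {a}" by (auto simp: card_Suc_eq)
    have "reactant eta a (J a)" using re K by auto
    then have "stoich eta a (J a) \<le> 0" using eta
      by (cases a; cases "J a") (simp_all add: reactant_iff stoich_def)
    then have "sgn (setdet K (CS_matrix eta J)) \<noteq> 1"
      unfolding K setdet_single CS_matrix_def by (auto simp: sgn_if)
    with sg 1 show ?thesis by simp
  next
    case 2
    then obtain a b where K: "K = {a, b}" and ab: "a \<noteq> b" by (auto simp: card_2_iff)
    have ra: "reactant eta a (J a)" and rb: "reactant eta b (J b)" using re K by auto
    have jab: "J a \<noteq> J b" using inj K ab by (auto simp: inj_on_def)
    have neg: "setdet K (CS_matrix eta J) < 0"
      using sg 2 by (auto simp: sgn_if split: if_splits)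
    then have neg': "stoich eta a (J a) * stoich eta b (J b) - stoich eta a (J b) * stoich eta b (J a) < 0"
      unfolding K setdet_pair[OF ab] CS_matrix_def .
    show ?thesis using ra rb jab neg' eta ab unfolding K
      by (cases a; cases b; cases "J a"; cases "J b") (simp_all add: reactant_iff stoich_def insert_commute)
  next
    case 3
    have cJ: "card (J ` K) \<ge> 3" using 3 inj by (simp add: card_image)
    have pairs: "(R1 \<in> J ` K \<and> R2 \<in> J ` K) \<or> (R3 \<in> J ` K \<and> R4 \<in> J ` K)"
    proof (rule ccontr)
      assume "\<not> ?thesis"
      then obtain p q where p: "p \<notin> J ` K" and q: "q \<notin> J ` K" and pq: "p \<noteq> q"
        by (metis reaction.distinct)
      have "J ` K \<subseteq> UNIV - {p, q}" using p q by auto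
      then have "card (J ` K) \<le> card (UNIV - {p, q})" by (intro card_mono) auto
      also have "\<dots> = 2" using pq by (simp add: card_Diff_subset card_reaction)
      finally show False using cJ by simp
    qed
    have "setdet K (CS_matrix eta J) = 0"
    proof -
      from pairs obtain a b where a: "a \<in> K" and b: "b \<in> K" and
        col: "\<And>i. stoich eta i (J a) = - stoich eta i (J b)"
      proof
        assume "R1 \<in> J ` K \<and> R2 \<in> J ` K"
        then obtain a b where "a \<in> K" "b \<in> K" "J a = R1" "J b = R2" by auto
        moreover have "\<And>i. stoich eta i R1 = - stoich eta i R2" by (case_tac i) (simp_all add: stoich_def)
        ultimately show ?thesis using that by metis
      next
        assume "R3 \<in> J ` K \<and> R4 \<in> J ` K"
        then obtain a b where "a \<in> K" "b \<in> K" "J a = R3" "J b = R4" by auto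
        moreover have "\<And>i. stoich eta i R3 = - stoich eta i R4" by (case_tac i) (simp_all add: stoich_def)
        ultimately show ?thesis using that by metis
      qed
      have "a \<noteq> b"
      proof
        assume "a = b"
        then have "stoich eta L1 (J a) = 0 \<and> stoich eta L2 (J a) = 0 \<and> stoich eta I1 (J a) = 0 \<and> stoich eta I2 (J a) = 0"
          using col[of L1] col[of L2] col[of I1] col[of I2] by simp
        then show False by (cases "J a") (simp_all add: stoich_def)
      qed
      then show ?thesis
        by (rule setdet_negcols[OF fin a b]) (simp add: CS_matrix_def col)
    qed
    then show ?thesis using sg by simp
  qed
qed

lemma motifs:
  assumes eta: "eta > 0"
  shows "nonaut_motifs eta = {({L1, L2}, {R1, R3})}"
proof
  show "nonaut_motifs eta \<subseteq> {({L1, L2}, {R1, R3})}"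
    using motif_char[OF eta] unfolding nonaut_motifs_def by fastforce
next
  define J0 where "J0 = (\<lambda>x. if x = L1 then R1 else R3)"
  have cs: "CS_triple eta {L1, L2} J0"
    using eta unfolding CS_triple_def J0_def by (simp add: reactant_iff)
  have d: "setdet {L1, L2} (CS_matrix eta J0) = -1"
    by (simp add: setdet_pair CS_matrix_def J0_def stoich_def)
  have sub: "K' = {L1} \<or> K' = {L2}" if "K' \<subset> {L1, L2}" "K' \<noteq> {}" for K' :: "species set"
    using that by blast
  have up: "unstable_positive {L1, L2} (CS_matrix eta J0)"
    unfolding unstable_positive_def
  proof (intro conjI allI impI)
    show "sgn (setdet {L1, L2} (CS_matrix eta J0)) = (-1) ^ (card {L1, L2} - 1)"
      using d by simp
  next
    fix K' assume "K' \<subset> {L1, L2} \<and> K' \<noteq> {}"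
    then have "K' = {L1} \<or> K' = {L2}" using sub by blast
    then show "sgn (setdet K' (CS_matrix eta J0)) \<noteq> (-1) ^ (card K' - 1)"
      by (auto simp: setdet_single CS_matrix_def J0_def stoich_def)
  qed
  have na: "non_autocatalytic {L1, L2} (CS_matrix eta J0)"
    unfolding non_autocatalytic_def CS_matrix_def J0_def
    by (rule bexI[of _ L1]) (auto intro: bexI[of _ L2] simp: stoich_def)
  have "J0 ` {L1, L2} = {R1, R3}" by (auto simp: J0_def)
  show "{({L1, L2}, {R1, R3})} \<subseteq> nonaut_motifs eta"
  proof -
    have "({L1, L2}, J0 ` {L1, L2}) \<in> nonaut_motifs eta"
      unfolding nonaut_motifs_def using cs up na by blast
    then show ?thesis using \<open>J0 ` {L1, L2} = {R1, R3}\<close> by simp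
  qed
qed


theorem proposition4p4:
  fixes eta :: real
  assumes "eta > 0"
  shows "capacity_zero_eig_bif eta
    \<and> (\<forall>dr. admissible eta dr \<longrightarrow>
          (restricted_singular (jac eta dr) \<longleftrightarrow> d2_ro dr + dI_re dr = d1_ro dr))
    \<and> (\<forall>dr. admissible eta dr \<longrightarrow> restricted_unstable (jac eta dr) \<longrightarrow>
          d2_ro dr + dI_re dr < d1_ro dr)
    \<and> nonaut_motifs eta = {({L1, L2}, {R1, R3})}"
proof -
  define dr0 :: "reaction \<Rightarrow> species \<Rightarrow> real" where
    "dr0 = (\<lambda>j n. if reactant eta n j then (if (j = R1 \<and> n = L1) \<or> (j = R3 \<and> n = L2) then 2 else 1) else 0)"
  have adm: "admissible eta dr0"
    using assms unfolding admissible_def dr0_def by (auto simp: reactant_iff)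
  have "d2_ro dr0 + dI_re dr0 = d1_ro dr0"
    using assms unfolding d1_ro_def d2_ro_def dI_re_def dr0_def by (simp add: reactant_iff)
  then have "restricted_singular (jac eta dr0)" using sing_iff[OF assms adm] by simp
  then have cap: "capacity_zero_eig_bif eta" unfolding capacity_zero_eig_bif_def using adm by blast
  show ?thesis using cap sing_iff[OF assms] unst[OF assms] motifs[OF assms] by blast
qed

end
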